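(* Let $n,N,L\ge1$ be integers and $0<p<1$. In the random model described in the context, for every address $\mathbf{x}\in C$ and every integer $s\in[2^n]$, the probability that $\mathbf{x}$ has order $s$ in $\mathcal{G}$ is $$P(\mathbf{x}\in\mathsf{X}_s)=\begin{cases}\left(\sum_{i=\ell}^{n}\binom{n}{i}p^i(1-p)^{n-i}\right)^N-\left(\sum_{i=\ell+1}^{n}\binom{n}{i}p^i(1-p)^{n-i}\right)^N, & s=2^\ell \text{ for some } \ell\in\{0,1,\dots,n\},\\[2pt] 0, & \text{otherwise.}\end{cases}$$
   Context: Model: $M=2^n$, addresses $C=\{0,1\}^n$; each address $\mathbf{x}$ carries a strand $(\mathbf{x},\mathbf{d})$ with data $\mathbf{d}$ independent uniform on $\{0,1\}^L$. Each strand is transmitted $N$ times through $\mathsf{BEC}(p)$ (each symbol independently replaced by $*$ with probability $p$, independently across transmissions and strands); $\mathcal{S}_N((\mathbf{x},\mathbf{d}))$ is the multiset of the $N$ reads of that strand. An address $\mathbf{x}'$ is compatible with a read $(\mathbf{y},\mathbf{d}')$ if it coincides with $\mathbf{y}$ at all non-erased positions of $\mathbf{y}$. The bipartite graph $\mathcal{G}$ has left vertices $C$, right vertices all $MN$ reads, and an edge between an address and a read iff they are compatible; $E_{(\mathbf{y},\mathbf{d}')}$ denotes the set of left neighbours of a read. A left vertex $\mathbf{x}$ has order $s$ if $\min\{|E_{(\mathbf{y},\mathbf{d}')}|:(\mathbf{y},\mathbf{d}')\in\mathcal{S}_N((\mathbf{x},\mathbf{d}))\}=s$; $\mathsf{X}_s$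 is the set of left vertices of order $s$. *)

theory Defs
  imports "HOL-Probability.Product_PMF"
begin

text \<open>Symbols of a read: None = erasure, Some b = received bit b.\<close>

definition bec_sym :: "real \<Rightarrow> bool \<Rightarrow> bool option pmf" where
  "bec_sym p b = map_pmf (\<lambda>e. if e then None else Some b) (bernoulli_pmf p)"

fun bec :: "real \<Rightarrow> bool list \<Rightarrow> bool option list pmf" where
  "bec p [] = return_pmf []"
| "bec p (b # bs) =
     bind_pmf (bec_sym p b) (\<lambda>c. bind_pmf (bec p bs) (\<lambda>cs. return_pmf (c # cs)))"

fun iid :: "nat \<Rightarrow> 'a pmf \<Rightarrow> 'a list pmf" where
  "iid 0 D = return_pmf []"
| "iid (Suc k) D = bind_pmf D (\<lambda>r. bind_pmf (iid k D) (\<lambda>rs. return_pmf (r # rs)))"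

text \<open>Address set C = {0,1}^n, data space {0,1}^L.\<close>
definition addrs :: "nat \<Rightarrow> bool list set" where
  "addrs n = {xs. length xs = n}"

text \<open>A strand (x,d) is the concatenated word x @ d; a read is a word of length n+L
  whose first n symbols are the (noisy) address and last L symbols the (noisy) data.\<close>
definition model :: "nat \<Rightarrow> nat \<Rightarrow> nat \<Rightarrow> real \<Rightarrow> (bool list \<Rightarrow> bool option list list) pmf" where
  "model n N L p = Pi_pmf (addrs n) []
     (\<lambda>x. bind_pmf (pmf_of_set (addrs L)) (\<lambda>d. iid N (bec p (x @ d))))"

definition compatible :: "nat \<Rightarrow> bool list \<Rightarrow> bool option list \<Rightarrow> bool" where
  "compatible n x' r \<longleftrightarrow> (\<forall>i<n. r ! i \<noteq> None \<longrightarrow> r ! i = Some (x' ! i))"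

definition nbhd :: "nat \<Rightarrow> bool option list \<Rightarrow> bool list set" where
  "nbhd n r = {x' \<in> addrs n. compatible n x' r}"

definition order_of :: "nat \<Rightarrow> (bool list \<Rightarrow> bool option list list) \<Rightarrow> bool list \<Rightarrow> nat" where
  "order_of n \<omega> x = Min ((\<lambda>r. card (nbhd n r)) ` set (\<omega> x))"

definition tailsum :: "nat \<Rightarrow> real \<Rightarrow> nat \<Rightarrow> real" where
  "tailsum n p l = (\<Sum>i=l..n. real (n choose i) * p ^ i * (1 - p) ^ (n - i))"

end

theory Submission
  imports Defs
begin

definition S :: "bool option list \<Rightarrow> bool list set" where
  "S r = {xs. list_all2 (\<lambda>c b. c = None \<or> c = Some b) r xs}"

lemma S_Cons: "S (c # r) = (\<lambda>(b,xs). b # xs) ` ({b. c = None \<or> c = Some b} \<times> S r)"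
  by (auto simp: S_def list_all2_Cons1)

lemma finite_S: "finite (S r) \<and> card (S r) = 2 ^ count_list r None"
proof (induction r)
  case Nil
  then show ?case by (simp add: S_def)
next
  case (Cons c r)
  have inj: "inj_on (\<lambda>(b,xs). b # xs) ({b. c = None \<or> c = Some b} \<times> S r)"
    by (auto simp: inj_on_def)
  have cb: "card {b. c = None \<or> c = Some b} = (if c = None then 2 else 1)"
  proof (cases c)
    case None
    then have "{b. c = None \<or> c = Some b} = UNIV" by auto
    then show ?thesis using None by simp
  next
    case (Some a)
    then have "{b. c = None \<or> c = Some b} = {a}" by auto
    then show ?thesis using Some by simp
  qed
  show ?case using Cons inj cb
    by (simp add: S_Cons card_image card_cartesian_product)
qed

lemma nbhd_S: "length r = n \<Longrightarrow> nbhd n r = S r"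
  by (auto simp: nbhd_def S_def addrs_def compatible_def list_all2_conv_all_nth)

lemma card_nbhd: "length r = n \<Longrightarrow> card (nbhd n r) = 2 ^ count_list r None"
  by (metis finite_S nbhd_S)

lemma nbhd_take: "nbhd n r = nbhd n (take n r)"
  by (simp add: nbhd_def compatible_def)

lemma bec_len: "r \<in> set_pmf (bec p x) \<Longrightarrow> length r = length x"
  by (induction x arbitrary: r) auto

lemma bec_take: "map_pmf (take (length x)) (bec p (x @ d)) = bec p x"
proof (induction x)
  case Nil
  then show ?case by (simp add: map_pmf_def bind_return_pmf' )
next
  case (Cons b x)
  show ?case using Cons[symmetric]
    by (simp add: map_bind_pmf bind_map_pmf map_pmf_def bind_return_pmf bind_assoc_pmf)
qed

lemma bec_count:
  assumes "0 \<le> p" "p \<le> 1"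
  shows "map_pmf (\<lambda>r. count_list r None) (bec p x) = binomial_pmf (length x) p"
proof (induction x)
  case Nil
  show ?case by (rule pmf_eqI) (use assms in \<open>auto simp: indicator_def\<close>)
next
  case (Cons b x)
  have "binomial_pmf (length (b # x)) p = do {e \<leftarrow> bernoulli_pmf p;
                 k \<leftarrow> binomial_pmf (length x) p;
                 return_pmf ((if e then 1 else 0) + k)}"
    using assms by (simp add: binomial_pmf_Suc)
  also have "\<dots> = map_pmf (\<lambda>r. count_list r None) (bec p (b # x))"
    unfolding Cons[symmetric]
    apply (simp add: bec_sym_def map_bind_pmf bind_map_pmf map_pmf_def bind_return_pmf bind_assoc_pmf)
    apply (intro bind_pmf_cong refl)
    apply simp
    done
  finally show ?case by simp
qed

lemma rep_map: "map_pmf (map f) (replicate_pmf N D) = replicate_pmf N (map_pmf f D)"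
proof (induction N)
  case (Suc N)
  show ?case by (simp add: Suc.IH[symmetric] map_bind_pmf bind_map_pmf)
qed simp

lemma iid_rep: "iid N D = replicate_pmf N D"
  by (induction N) auto

lemma emeas_all: "emeasure (measure_pmf (replicate_pmf N D)) {ks. \<forall>k\<in>set ks. P k} = emeasure (measure_pmf D) {k. P k} ^ N"
proof (induction N)
  case 0
  then show ?case by (simp add: measure_pmf.emeasure_space_1[simplified])
next
  case (Suc N)
  have "emeasure (measure_pmf (replicate_pmf (Suc N) D)) {ks. \<forall>k\<in>set ks. P k}
     = (\<integral>\<^sup>+r. indicator {k. P k} r * emeasure (measure_pmf (replicate_pmf N D)) {ks. \<forall>k\<in>set ks. P k} \<partial>D)"
    by (auto simp: bind_return_pmf map_pmf_def[symmetric] intro!: nn_integral_cong split: split_indicator)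
  also have "\<dots> = emeasure (measure_pmf D) {k. P k} * emeasure (measure_pmf (replicate_pmf N D)) {ks. \<forall>k\<in>set ks. P k}"
    by (simp add: nn_integral_multc)
  finally show ?case using Suc by (simp add: mult.commute)
qed

lemma prob_all: "measure_pmf.prob (replicate_pmf N D) {ks. \<forall>k\<in>set ks. P k} = measure_pmf.prob D {k. P k} ^ N"
  using emeas_all[of N D P] by (simp add: measure_pmf.emeasure_eq_measure ennreal_power)

lemma tail_bin:
  assumes "0 < p" "p < 1"
  shows "measure_pmf.prob (binomial_pmf n p) {k. l \<le> k} = tailsum n p l"
proof -
  have "measure_pmf.prob (binomial_pmf n p) {k. l \<le> k}
      = measure_pmf.prob (binomial_pmf n p) ({k. l \<le> k} \<inter> set_pmf (binomial_pmf n p))"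
    by (simp add: measure_Int_set_pmf)
  also have "{k. l \<le> k} \<inter> set_pmf (binomial_pmf n p) = {l..n}"
    using assms by auto
  also have "measure_pmf.prob (binomial_pmf n p) {l..n} = tailsum n p l"
    using assms by (simp add: measure_measure_pmf_finite tailsum_def)
  finally show ?thesis .
qed

lemma min_dist:
  assumes "0 < p" "p < 1" "N \<ge> 1"
  shows "measure_pmf.prob (replicate_pmf N (binomial_pmf n p)) {ks. Min (set ks) = l}
     = tailsum n p l ^ N - tailsum n p (l + 1) ^ N"
proof -
  let ?M = "replicate_pmf N (binomial_pmf n p)"
  let ?A = "\<lambda>l. {ks. \<forall>k\<in>set ks. l \<le> k}"
  have supp: "ks \<in> set_pmf ?M \<Longrightarrow> ks \<noteq> []" for ks
    using assms by (auto simp: set_replicate_pmf)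
  have "{ks. Min (set ks) = l} \<inter> set_pmf ?M = (?A l - ?A (l+1)) \<inter> set_pmf ?M"
  proof (intro equalityI subsetI)
    fix ks assume "ks \<in> {ks. Min (set ks) = l} \<inter> set_pmf ?M"
    then have "ks \<noteq> []" "Min (set ks) = l" "ks \<in> set_pmf ?M" using supp by auto
    then show "ks \<in> (?A l - ?A (l+1)) \<inter> set_pmf ?M"
    proof -
      have "Min (set ks) \<in> set ks" using \<open>ks \<noteq> []\<close> by simp
      then have "ks \<notin> ?A (l+1)" using \<open>Min (set ks) = l\<close> by force
      moreover have "\<forall>k\<in>set ks. l \<le> k"
      proof
        fix k assume "k \<in> set ks"
        then have "Min (set ks) \<le> k" by (intro Min_le) auto
        then show "l \<le> k" using \<open>Min (set ks) = l\<close> by simp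
      qed
      then have "ks \<in> ?A l" by simp
      ultimately show ?thesis using \<open>ks \<in> set_pmf ?M\<close> by blast
    qed
  next
    fix ks assume "ks \<in> (?A l - ?A (l+1)) \<inter> set_pmf ?M"
    then have "ks \<noteq> []" "ks \<in> ?A l" "ks \<notin> ?A (l+1)" "ks \<in> set_pmf ?M" using supp by auto
    then show "ks \<in> {ks. Min (set ks) = l} \<inter> set_pmf ?M"
    proof -
      assume h: "ks \<noteq> []" "ks \<in> ?A l" "ks \<notin> ?A (l+1)" "ks \<in> set_pmf ?M"
      have "l \<le> Min (set ks)" using h(1,2) by simp
      moreover obtain k where k: "k \<in> set ks" "k < l + 1" using h(3) by force
      have "Min (set ks) \<le> k" using k(1) by (intro Min_le) auto
      then have "Min (set ks) \<le> l" using k(2) by simp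
      ultimately show ?thesis using h(4) by simp
    qed
  qed
  note eq = this
  have "measure_pmf.prob ?M {ks. Min (set ks) = l} = measure_pmf.prob ?M ({ks. Min (set ks) = l} \<inter> set_pmf ?M)"
    by (rule measure_Int_set_pmf[symmetric])
  also have "\<dots> = measure_pmf.prob ?M ((?A l - ?A (l+1)) \<inter> set_pmf ?M)"
    by (simp only: eq)
  also have "\<dots> = measure_pmf.prob ?M (?A l - ?A (l+1))"
    by (rule measure_Int_set_pmf)
  also have "\<dots> = measure_pmf.prob ?M (?A l) - measure_pmf.prob ?M (?A (l+1))"
    by (rule measure_pmf.finite_measure_Diff) auto
  also have "\<dots> = tailsum n p l ^ N - tailsum n p (l + 1) ^ N"
    using assms by (simp add: prob_all tail_bin)
  finally show ?thesis .
qed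

lemma prob_cong_supp:
  assumes "\<And>x. x \<in> set_pmf M \<Longrightarrow> x \<in> A \<longleftrightarrow> x \<in> B"
  shows "measure_pmf.prob M A = measure_pmf.prob M B"
proof -
  have eq: "A \<inter> set_pmf M = B \<inter> set_pmf M" using assms by blast
  have "measure_pmf.prob M A = measure_pmf.prob M (A \<inter> set_pmf M)"
    by (rule measure_Int_set_pmf[symmetric])
  also have "\<dots> = measure_pmf.prob M (B \<inter> set_pmf M)" by (simp only: eq)
  also have "\<dots> = measure_pmf.prob M B" by (rule measure_Int_set_pmf)
  finally show ?thesis .
qed

lemma finite_addrs: "finite (addrs n)"
proof -
  have "addrs n = {xs. set xs \<subseteq> UNIV \<and> length xs = n}" by (auto simp: addrs_def)
  then show ?thesis using finite_lists_length_eq[of "UNIV::bool set" n] by simp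
qed

lemma addrs_ne: "addrs n \<noteq> {}"
  by (auto simp: addrs_def intro!: exI[of _ "replicate n True"])

theorem lemma8:
  fixes n N L :: nat and p :: real and x :: "bool list" and s :: nat
  assumes "n \<ge> 1" and "N \<ge> 1" and "L \<ge> 1"
    and "0 < p" and "p < 1"
    and "x \<in> addrs n"
    and "s \<in> {1..2 ^ n}"
  shows "measure_pmf.prob (model n N L p) {\<omega>. order_of n \<omega> x = s} =
     (if \<exists>l\<in>{0..n}. s = 2 ^ l
      then (let l = (THE l. l \<in> {0..n} \<and> s = 2 ^ l) in
              tailsum n p l ^ N - tailsum n p (l + 1) ^ N)
      else 0)"
proof -
  have lx: "length x = n" using assms(6) by (simp add: addrs_def)
  define F where "F = (\<lambda>x. bind_pmf (pmf_of_set (addrs L)) (\<lambda>d. iid N (bec p (x @ d))))"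
  define G where "G = (\<lambda>rs. Min ((\<lambda>r. card (nbhd n r)) ` set rs))"
  define B where "B = bec p x"
  define Bin where "Bin = binomial_pmf n p"
  have "measure_pmf.prob (model n N L p) {\<omega>. order_of n \<omega> x = s}
      = measure_pmf.prob (map_pmf (\<lambda>\<omega>. \<omega> x) (model n N L p)) {rs. G rs = s}"
    by (simp add: order_of_def G_def vimage_def)
  also have "map_pmf (\<lambda>\<omega>. \<omega> x) (model n N L p) = F x"
    unfolding model_def F_def by (subst Pi_pmf_component[OF finite_addrs]) (use assms(6) in simp)
  also have "measure_pmf.prob (F x) {rs. G rs = s}
      = measure_pmf.prob (map_pmf (map (take n)) (F x)) {rs. G rs = s}"
  proof -
    have "G (map (take n) rs) = G rs" for rs
      unfolding G_def by (simp add: image_image nbhd_take[symmetric])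
    then show ?thesis by (simp add: vimage_def)
  qed
  also have "map_pmf (map (take n)) (F x) = replicate_pmf N B"
  proof -
    have "map_pmf (map (take n)) (F x)
        = bind_pmf (pmf_of_set (addrs L)) (\<lambda>d. map_pmf (map (take n)) (replicate_pmf N (bec p (x @ d))))"
      by (simp add: F_def map_bind_pmf iid_rep)
    also have "\<dots> = bind_pmf (pmf_of_set (addrs L)) (\<lambda>d. replicate_pmf N B)"
      by (simp add: rep_map B_def bec_take lx[symmetric])
    finally show ?thesis by simp
  qed
  also have "measure_pmf.prob (replicate_pmf N B) {rs. G rs = s}
      = measure_pmf.prob (map_pmf (map (\<lambda>r. card (nbhd n r))) (replicate_pmf N B)) {ks. Min (set ks) = s}"
    by (simp add: G_def vimage_def)
  also have "map_pmf (map (\<lambda>r. card (nbhd n r))) (replicate_pmf N B)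
      = map_pmf (map (\<lambda>k. 2 ^ k)) (replicate_pmf N Bin)"
  proof -
    have "map_pmf (\<lambda>r. card (nbhd n r)) B = map_pmf ((\<lambda>k. 2 ^ k) \<circ> (\<lambda>r. count_list r None)) B"
      by (rule map_pmf_cong) (auto simp: B_def card_nbhd bec_len lx)
    also have "\<dots> = map_pmf (\<lambda>k. 2 ^ k) Bin"
      unfolding pmf.map_comp[symmetric] B_def Bin_def
      using assms(4,5) bec_count[of p x] lx by simp
    finally show ?thesis by (simp add: rep_map)
  qed
  finally have main: "measure_pmf.prob (model n N L p) {\<omega>. order_of n \<omega> x = s}
     = measure_pmf.prob (replicate_pmf N Bin) {ks. Min ((\<lambda>k. 2 ^ k) ` set ks) = s}"
    by (simp add: vimage_def)
  have supp: "ks \<noteq> [] \<and> set ks \<subseteq> {..n}" if "ks \<in> set_pmf (replicate_pmf N Bin)" for ks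
    using that assms(2,4,5) by (auto simp: set_replicate_pmf Bin_def)
  have mc: "Min ((\<lambda>k. 2 ^ k) ` set ks) = (2::nat) ^ Min (set ks)" if "ks \<noteq> []" for ks
    using that by (intro mono_Min_commute[symmetric]) (auto simp: mono_def)
  show ?thesis
  proof (cases "\<exists>l\<in>{0..n}. s = 2 ^ l")
    case True
    then obtain l where l: "l \<in> {0..n}" "s = 2 ^ l" by blast
    have th: "(THE l. l \<in> {0..n} \<and> s = 2 ^ l) = l"
      using l by (intro the_equality) auto
    have "measure_pmf.prob (replicate_pmf N Bin) {ks. Min ((\<lambda>k. 2 ^ k) ` set ks) = s}
        = measure_pmf.prob (replicate_pmf N Bin) {ks. Min (set ks) = l}"
      by (rule prob_cong_supp) (use supp mc l in auto)
    also have "\<dots> = tailsum n p l ^ N - tailsum n p (l + 1) ^ N"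
      unfolding Bin_def using assms by (intro min_dist) auto
    finally show ?thesis using True main th by (simp add: Let_def)
  next
    case False
    have "measure_pmf.prob (replicate_pmf N Bin) {ks. Min ((\<lambda>k. 2 ^ k) ` set ks) = s}
        = measure_pmf.prob (replicate_pmf N Bin) {}"
    proof (rule prob_cong_supp)
      fix ks assume ks: "ks \<in> set_pmf (replicate_pmf N Bin)"
      have "Min (set ks) \<in> set ks" using supp[OF ks] by simp
      then have "Min (set ks) \<in> {..n}" using supp[OF ks] by blast
      then have "Min (set ks) \<in> {0..n}" by simp
      then show "ks \<in> {ks. Min ((\<lambda>k. 2 ^ k) ` set ks) = s} \<longleftrightarrow> ks \<in> {}"
        using False mc supp[OF ks] by auto
    qed
    then show ?thesis using False main by simp
  qed
qed

end
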